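(* In the setting of the free pseudosolution $A+f(A)$ of $(B\le A,f)$ (with $V\oplus\bigwedge^2V/N(V)$ a $2$-nilpotent graded Lie algebra over $\mathbb{F}_q$, $B\subseteq A\subseteq V$ finite-dimensional and $f\colon B\to V$ a partially defined graded derivation), we have \[N(V)\cap\textstyle\bigwedge^2\big(A+f(B)\big)=N(A+f(A))\cap\textstyle\bigwedge^2\big(A+f(B)\big).\] Hence the subalgebra of $V\oplus\bigwedge^2V/N(V)$ generated by $A+f(B)$ is also a graded subalgebra of $\mathfrak g=(A+f(A))\oplus\bigwedge^2(A+f(A))/N(A+f(A))$, and, since $\tilde f(N(A))\subseteq N(A+f(A))$, the linear map $f\colon A\to A+f(A)$ induces a (graded) derivation-type map from the subalgebra generated by $A$ into $\mathfrak g$ extending the one induced by $f|_B$.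
   Context: All vector spaces are over a finite field $\mathbb{F}_q$; $\bigwedge^2 X$ denotes the exterior square. A $2$-nilpotent graded Lie algebra is presented as $V\oplus\bigwedge^2 V/N(V)$ with $N(V)\subseteq\bigwedge^2V$; the bracket of $x,y\in V$ is the class of $x\wedge y$. For a subspace $X\subseteq V$ put $N(X):=N(V)\cap\bigwedge^2X$. For a linear map $g\colon X\to Y$ between subspaces of a common space, $\tilde g\colon\bigwedge^2X\to\bigwedge^2(X+Y)$ is the linear map with $\tilde g(x\wedge y)=g(x)\wedge y+x\wedge g(y)$. A partially defined graded derivation is a linear map $f\colon B\to V$, $B$ a finite-dimensional subspace of $V$, with $\tilde f(N(B))\subseteq N(V)$. Free pseudosolution: given finite-dimensional $B\subseteq A\subseteq V$ and a partially defined graded derivation $f\colon B\to V$, take an abstract vector space $U\supseteq A+f(B)$ with $\dim(U/(A+f(B)))=\dim(A/B)$, extend $f$ to a linear $f\colon A\to U$ sending a basis of $A$ over $B$ onto a basis of $U$ over $A+f(B)$ (so $U=A+f(A)$), and set $N(A+f(A)):=N(A+f(B))+\tilde f(N(A))$, where $N(A+f(B))=N(V)\cap\bigwedge^2(A+f(B))$ and $N(A)=N(V)\cap\bigwedge^2A$. *)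

theory Defs
  imports Main HOL.Modules "HOL-Library.Function_Algebras"
begin

text \<open>Ambient space: functions 'i => 'a over a field 'a (coordinate space K^I).
Every vector space embeds into such a space, so subspaces of it model arbitrary
vector spaces.  The exterior square of a subspace X is modelled faithfully inside
functions on I x I, x wedge y being the antisymmetrised outer product; over a field
the induced map from the abstract exterior square of X is injective.\<close>

definition sc :: "'a::field \<Rightarrow> ('i \<Rightarrow> 'a) \<Rightarrow> ('i \<Rightarrow> 'a)" where
  "sc c x = (\<lambda>i. c * x i)"

abbreviation vspan :: "('i \<Rightarrow> 'a::field) set \<Rightarrow> ('i \<Rightarrow> 'a) set" where
  "vspan \<equiv> module.span sc"

abbreviation vsubspace :: "('i \<Rightarrow> 'a::field) set \<Rightarrow> bool" where
  "vsubspace \<equiv> module.subspace sc"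

definition fin_dim :: "('i \<Rightarrow> 'a::field) set \<Rightarrow> bool" where
  "fin_dim X \<longleftrightarrow> (\<exists>S. finite S \<and> X = vspan S)"

definition ssum :: "('b::plus) set \<Rightarrow> 'b set \<Rightarrow> 'b set" where
  "ssum X Y = {x + y | x y. x \<in> X \<and> y \<in> Y}"

definition wedge :: "('i \<Rightarrow> 'a::field) \<Rightarrow> ('i \<Rightarrow> 'a) \<Rightarrow> ('i \<times> 'i \<Rightarrow> 'a)" where
  "wedge x y = (\<lambda>(i, j). x i * y j - x j * y i)"

definition wedge2 :: "('i \<Rightarrow> 'a::field) set \<Rightarrow> ('i \<times> 'i \<Rightarrow> 'a) set" where
  "wedge2 X = vspan {wedge x y | x y. x \<in> X \<and> y \<in> X}"

definition linear_on :: "('b \<Rightarrow> 'a::field) set \<Rightarrow> (('b \<Rightarrow> 'a) \<Rightarrow> ('c \<Rightarrow> 'a)) \<Rightarrow> bool" where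
  "linear_on X g \<longleftrightarrow> (\<forall>x\<in>X. \<forall>y\<in>X. g (x + y) = g x + g y) \<and> (\<forall>c. \<forall>x\<in>X. g (sc c x) = sc c (g x))"

definition tilde :: "(('i \<Rightarrow> 'a::field) \<Rightarrow> ('i \<Rightarrow> 'a)) \<Rightarrow> ('i \<Rightarrow> 'a) set
                    \<Rightarrow> ('i \<times> 'i \<Rightarrow> 'a) \<Rightarrow> ('i \<times> 'i \<Rightarrow> 'a)" where
  "tilde g X = (THE h. linear_on (wedge2 X) h
       \<and> (\<forall>x\<in>X. \<forall>y\<in>X. h (wedge x y) = wedge (g x) y + wedge x (g y))
       \<and> (\<forall>w. w \<notin> wedge2 X \<longrightarrow> h w = 0))"

text \<open>T (finite) is a basis of X over the subspace Y \<subseteq> X, i.e. its image is a basis of X/Y\<close>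
definition rel_basis :: "('i \<Rightarrow> 'a::field) set \<Rightarrow> ('i \<Rightarrow> 'a) set \<Rightarrow> ('i \<Rightarrow> 'a) set \<Rightarrow> bool" where
  "rel_basis X Y T \<longleftrightarrow> finite T \<and> T \<subseteq> X \<and> vspan (Y \<union> T) = X
     \<and> (\<forall>c. (\<Sum>t\<in>T. sc (c t) t) \<in> Y \<longrightarrow> (\<forall>t\<in>T. c t = 0))"

end

theory Submission
  imports Defs
begin


interpretation vs: module "sc :: 'a::field \<Rightarrow> ('i \<Rightarrow> 'a) \<Rightarrow> _"
  by standard (auto simp: sc_def fun_eq_iff algebra_simps)

declare plus_fun_apply[simp del] zero_fun_apply[simp del] uminus_apply[simp del] minus_apply[simp del]
lemma sc_apply: "sc c x i = c * x i" by (simp add: sc_def)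
lemmas fa = plus_fun_apply zero_fun_apply sc_apply uminus_apply minus_apply

lemma test: "vsubspace (X :: ('i \<times> 'i \<Rightarrow> 'a::field) set) \<Longrightarrow> 0 \<in> X"
  using vs.subspace_0 by blast

definition WS :: "(('i \<Rightarrow> 'a::field) \<times> ('i \<Rightarrow> 'a)) list \<Rightarrow> ('i \<times> 'i \<Rightarrow> 'a)" where
  "WS L = sum_list (map (\<lambda>(x,y). wedge x y) L)"
definition TW :: "(('i \<Rightarrow> 'a::field) \<Rightarrow> ('i \<Rightarrow> 'a)) \<Rightarrow> (('i \<Rightarrow> 'a) \<times> ('i \<Rightarrow> 'a)) list \<Rightarrow> ('i \<times> 'i \<Rightarrow> 'a)" where
  "TW g L = sum_list (map (\<lambda>(x,y). wedge (g x) y + wedge x (g y)) L)"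
definition inX :: "'b set \<Rightarrow> ('b \<times> 'b) list \<Rightarrow> bool" where
  "inX X L \<longleftrightarrow> (\<forall>p\<in>set L. fst p \<in> X \<and> snd p \<in> X)"

lemma sum_list_apply: "(sum_list xs :: 'b \<Rightarrow> 'c::monoid_add) k = sum_list (map (\<lambda>f. f k) xs)"
  by (induction xs) (auto simp: fa)

lemma WS_apply: "WS L (i,j) = sum_list (map (\<lambda>(x,y). x i * y j - x j * y i) L)"
  by (induction L) (auto simp: WS_def wedge_def fa)

lemma TW_apply: "TW g L (i,j) = sum_list (map (\<lambda>(x,y). g x i * y j - g x j * y i + (x i * g y j - x j * g y i)) L)"
  by (induction L) (auto simp: TW_def wedge_def fa)

lemma WS_append[simp]: "WS (L1 @ L2) = WS L1 + WS L2" by (simp add: WS_def)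
lemma TW_append[simp]: "TW g (L1 @ L2) = TW g L1 + TW g L2" by (simp add: TW_def)
lemma WS_Nil[simp]: "WS [] = 0" by (simp add: WS_def)
lemma TW_Nil[simp]: "TW g [] = 0" by (simp add: TW_def)
lemma WS_Cons[simp]: "WS (p # L) = wedge (fst p) (snd p) + WS L" by (simp add: WS_def split: prod.splits)
lemma TW_Cons[simp]: "TW g (p # L) = wedge (g (fst p)) (snd p) + wedge (fst p) (g (snd p)) + TW g L"
  by (simp add: TW_def split: prod.splits)

lemma wedge_sc: "wedge (sc c x) y = sc c (wedge x y)"
  by (auto simp: wedge_def fun_eq_iff algebra_simps fa)

lemma wedge_in: "x \<in> X \<Longrightarrow> y \<in> X \<Longrightarrow> wedge x y \<in> wedge2 X"
  unfolding wedge2_def by (rule vs.span_base) blast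

lemma WS_in: "inX X L \<Longrightarrow> WS L \<in> wedge2 X"
  by (induction L) (auto simp: inX_def wedge2_def intro!: vs.span_add vs.span_zero wedge_in[unfolded wedge2_def])

lemma wedge2_rep:
  assumes "\<forall>c. \<forall>x\<in>X. sc c x \<in> X" and "w \<in> wedge2 X"
  shows "\<exists>L. inX X L \<and> w = WS L"
  using assms(2) unfolding wedge2_def
proof (induction rule: vs.span_induct_alt)
  case base
  show ?case by (rule exI[of _ "[]"]) (simp add: inX_def)
next
  case (step c z y)
  then obtain L where L: "inX X L" "y = WS L" by blast
  from step(1) obtain a b where ab: "z = wedge a b" "a \<in> X" "b \<in> X" by blast
  show ?case
    by (rule exI[of _ "(sc c a, b) # L"]) (use L ab assms(1) in \<open>auto simp: inX_def wedge_sc\<close>)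
qed

lemma sc_m1: "sc (-1) w = - w"
  by (simp add: fun_eq_iff sc_apply fa)
lemma lin_add: "linear_on S h \<Longrightarrow> x \<in> S \<Longrightarrow> y \<in> S \<Longrightarrow> h (x + y) = h x + h y"
  by (simp add: linear_on_def)
lemma lin_sc: "linear_on S h \<Longrightarrow> x \<in> S \<Longrightarrow> h (sc c x) = sc c (h x)"
  by (simp add: linear_on_def)
lemma lin_zero: "linear_on S h \<Longrightarrow> 0 \<in> S \<Longrightarrow> h 0 = 0"
  using lin_sc[of S h 0 0] by simp

lemma lin_neg: "linear_on S h \<Longrightarrow> x \<in> S \<Longrightarrow> h (- x) = - h x"
  using lin_sc[of S h x "-1"] by (simp add: sc_m1)
lemma sub0: "vsubspace S \<Longrightarrow> 0 \<in> S" by (rule vs.subspace_0)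
lemma subadd: "vsubspace S \<Longrightarrow> x \<in> S \<Longrightarrow> y \<in> S \<Longrightarrow> x + y \<in> S" by (rule vs.subspace_add)
lemma subneg: "vsubspace S \<Longrightarrow> x \<in> S \<Longrightarrow> - x \<in> S" by (rule vs.subspace_neg)
lemma subsc: "vsubspace S \<Longrightarrow> x \<in> S \<Longrightarrow> sc c x \<in> S" by (rule vs.subspace_scale)

lemma sum_list_in: "vsubspace S \<Longrightarrow> \<forall>x\<in>set xs. x \<in> S \<Longrightarrow> sum_list xs \<in> S"
  by (induction xs) (auto intro: sub0 subadd)

lemma lin_list: "linear_on S h \<Longrightarrow> vsubspace S \<Longrightarrow> \<forall>x\<in>set xs. x \<in> S \<Longrightarrow> h (sum_list xs) = sum_list (map h xs)"
  by (induction xs) (auto simp: lin_zero sub0 lin_add sum_list_in)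

lemma tensor_left:
  assumes X: "vsubspace X" and g: "linear_on X g" and L: "\<forall>p\<in>set L. fst p \<in> X"
    and h: "\<forall>i j. sum_list (map (\<lambda>p. fst p i * snd p j) L) = 0"
  shows "sum_list (map (\<lambda>p. g (fst p) i * snd p j) L) = 0"
proof -
  define v where "v = sum_list (map (\<lambda>p. sc (snd p j) (fst p)) L)"
  have "v k = sum_list (map (\<lambda>p. fst p k * snd p j) L)" for k
    unfolding v_def by (induction L) (auto simp: mult.commute fa)
  hence v0: "v = 0" using h by (auto simp: fun_eq_iff fa)
  have "g v = sum_list (map (\<lambda>p. sc (snd p j) (g (fst p))) L)"
    unfolding v_def using L
  proof (induction L)
    case Nil then show ?case using lin_zero[OF g sub0[OF X]] by (simp add: zero_fun_def)
  next
    case (Cons p L)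
    have "sum_list (map (\<lambda>p. sc (snd p j) (fst p)) L) \<in> X"
      using Cons.prems by (auto intro!: sum_list_in X subsc)
    then show ?case using Cons by (simp add: lin_add[OF g] lin_sc[OF g] subsc[OF X])
  qed
  hence "sum_list (map (\<lambda>p. sc (snd p j) (g (fst p))) L) = 0"
    using v0 lin_zero[OF g sub0[OF X]] by simp
  hence "sum_list (map (\<lambda>p. sc (snd p j) (g (fst p))) L) i = 0" by (simp add: fa)
  moreover have "sum_list (map (\<lambda>p. sc (snd p j) (g (fst p))) L) i = sum_list (map (\<lambda>p. g (fst p) i * snd p j) L)"
    by (induction L) (auto simp: mult.commute fa)
  ultimately show ?thesis by simp
qed

lemma tensor_right:
  assumes X: "vsubspace X" and g: "linear_on X g" and L: "\<forall>p\<in>set L. snd p \<in> X"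
    and h: "\<forall>i j. sum_list (map (\<lambda>p. fst p i * snd p j) L) = 0"
  shows "sum_list (map (\<lambda>p. fst p i * g (snd p) j) L) = 0"
proof -
  have h': "\<forall>i j. sum_list (map (\<lambda>p. fst p i * snd p j) (map prod.swap L)) = 0"
  proof (intro allI)
    fix i j
    have "sum_list (map (\<lambda>p. fst p i * snd p j) (map prod.swap L)) = sum_list (map (\<lambda>p. fst p j * snd p i) L)"
      by (induction L) (auto simp: mult.commute fa)
    then show "sum_list (map (\<lambda>p. fst p i * snd p j) (map prod.swap L)) = 0" using h by simp
  qed
  have "sum_list (map (\<lambda>p. g (fst p) j * snd p i) (map prod.swap L)) = 0"
    by (rule tensor_left[OF X g _ h']) (use L in auto)
  moreover have "sum_list (map (\<lambda>p. g (fst p) j * snd p i) (map prod.swap L)) = sum_list (map (\<lambda>p. fst p i * g (snd p) j) L)"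
    by (induction L) (auto simp: mult.commute fa)
  ultimately show ?thesis by simp
qed

lemma wedge_neg: "wedge (- x) y = - wedge x y"
  by (simp add: fun_eq_iff wedge_def fa)

lemma TW_zero:
  assumes X: "vsubspace X" and g: "linear_on X g" and L: "inX X L" and w0: "WS L = 0"
  shows "TW g L = 0"
proof -
  define L2 where "L2 = L @ map (\<lambda>p. (sc (-1) (snd p), fst p)) L"
  have F: "\<forall>p\<in>set L2. fst p \<in> X \<and> snd p \<in> X"
    using L unfolding L2_def inX_def by (force intro: subsc[OF X] subneg[OF X])
  have hyp: "\<forall>i j. sum_list (map (\<lambda>p. fst p i * snd p j) L2) = 0"
  proof (intro allI)
    fix i j
    have "WS L (i,j) = sum_list (map (\<lambda>p. fst p i * snd p j) L2)"
      unfolding L2_def WS_apply by (induction L) (auto simp: fa algebra_simps)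
    then show "sum_list (map (\<lambda>p. fst p i * snd p j) L2) = 0" using w0 by (simp add: fa)
  qed
  have l: "sum_list (map (\<lambda>p. g (fst p) i * snd p j) L2) = 0" for i j
    by (rule tensor_left[OF X g _ hyp]) (use F in auto)
  have r: "sum_list (map (\<lambda>p. fst p i * g (snd p) j) L2) = 0" for i j
    by (rule tensor_right[OF X g _ hyp]) (use F in auto)
  have "TW g L (i,j) = sum_list (map (\<lambda>p. g (fst p) i * snd p j) L2) + sum_list (map (\<lambda>p. fst p i * g (snd p) j) L2)" for i j
    unfolding L2_def TW_apply using L
    by (induction L) (auto simp: fa algebra_simps inX_def lin_neg[OF g])
  then show ?thesis using l r by (auto simp: fun_eq_iff fa)
qed

definition negL :: "(('i \<Rightarrow> 'a::field) \<times> ('i \<Rightarrow> 'a)) list \<Rightarrow> _" where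
  "negL L = map (\<lambda>p. (sc (-1) (fst p), snd p)) L"

lemma WS_negL: "WS (negL L) = - WS L"
  unfolding negL_def by (induction L) (auto simp: wedge_neg)

lemma TW_negL: "linear_on X g \<Longrightarrow> inX X L \<Longrightarrow> TW g (negL L) = - TW g L"
  unfolding negL_def by (induction L) (auto simp: wedge_neg inX_def lin_sc[where c="-1", simplified])

lemma inX_negL: "vsubspace X \<Longrightarrow> inX X L \<Longrightarrow> inX X (negL L)"
  unfolding negL_def inX_def by (auto intro: subneg)

lemma WS_eq_TW:
  assumes X: "vsubspace X" and g: "linear_on X g" and L1: "inX X L1" and L2: "inX X L2"
    and e: "WS L1 = WS L2"
  shows "TW g L1 = TW g L2"
proof -
  have "inX X (L1 @ negL L2)" using L1 inX_negL[OF X L2] by (auto simp: inX_def)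
  moreover have "WS (L1 @ negL L2) = 0" using e by (simp add: WS_negL)
  ultimately have "TW g (L1 @ negL L2) = 0" by (rule TW_zero[OF X g])
  then show ?thesis by (simp add: TW_negL[OF g L2])
qed

definition hfun where
  "hfun g X w = (if w \<in> wedge2 X then TW g (SOME L. inX X L \<and> w = WS L) else 0)"

lemma sub_scl: "vsubspace X \<Longrightarrow> \<forall>c. \<forall>x\<in>X. sc c x \<in> X"
  by (auto intro: subsc)

lemma hfun_rep:
  assumes X: "vsubspace X" and g: "linear_on X g" and L: "inX X L"
  shows "hfun g X (WS L) = TW g L"
proof -
  have ex: "\<exists>L'. inX X L' \<and> WS L = WS L'" using L by blast
  have "inX X (SOME L'. inX X L' \<and> WS L = WS L') \<and> WS L = WS (SOME L'. inX X L' \<and> WS L = WS L')"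
    by (rule someI_ex[OF ex])
  then show ?thesis unfolding hfun_def using WS_in[OF L] WS_eq_TW[OF X g L] by auto
qed

definition scL :: "'a::field \<Rightarrow> (('i \<Rightarrow> 'a) \<times> ('i \<Rightarrow> 'a)) list \<Rightarrow> _" where
  "scL c L = map (\<lambda>p. (sc c (fst p), snd p)) L"

lemma WS_scL: "WS (scL c L) = sc c (WS L)"
  unfolding scL_def by (induction L) (auto simp: wedge_sc vs.scale_right_distrib)

lemma TW_scL: "linear_on X g \<Longrightarrow> inX X L \<Longrightarrow> TW g (scL c L) = sc c (TW g L)"
  unfolding scL_def by (induction L) (auto simp: wedge_sc inX_def lin_sc vs.scale_right_distrib)

lemma inX_scL: "vsubspace X \<Longrightarrow> inX X L \<Longrightarrow> inX X (scL c L)"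
  unfolding scL_def inX_def by (auto intro: subsc)

lemma wedge2_sub: "vsubspace (wedge2 X)"
  unfolding wedge2_def by (rule vs.subspace_span)

lemma hfun_props:
  assumes X: "vsubspace X" and g: "linear_on X g"
  shows "linear_on (wedge2 X) (hfun g X)
       \<and> (\<forall>x\<in>X. \<forall>y\<in>X. hfun g X (wedge x y) = wedge (g x) y + wedge x (g y))
       \<and> (\<forall>w. w \<notin> wedge2 X \<longrightarrow> hfun g X w = 0)"
proof (intro conjI)
  show "linear_on (wedge2 X) (hfun g X)"
    unfolding linear_on_def
  proof (intro conjI ballI allI)
    fix x y assume "x \<in> wedge2 X" "y \<in> wedge2 X"
    then obtain L1 L2 where "inX X L1" "x = WS L1" "inX X L2" "y = WS L2"
      using wedge2_rep[OF sub_scl[OF X]] by metis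
    moreover have "inX X (L1 @ L2)" using calculation by (auto simp: inX_def)
    ultimately show "hfun g X (x + y) = hfun g X x + hfun g X y"
      using hfun_rep[OF X g] by (metis TW_append WS_append)
  next
    fix c x assume "x \<in> wedge2 X"
    then obtain L1 where "inX X L1" "x = WS L1"
      using wedge2_rep[OF sub_scl[OF X]] by metis
    then show "hfun g X (sc c x) = sc c (hfun g X x)"
      using hfun_rep[OF X g] inX_scL[OF X] WS_scL TW_scL[OF g] by metis
  qed
  show "\<forall>x\<in>X. \<forall>y\<in>X. hfun g X (wedge x y) = wedge (g x) y + wedge x (g y)"
  proof (intro ballI)
    fix x y assume "x \<in> X" "y \<in> X"
    then have "inX X [(x,y)]" by (simp add: inX_def)
    from hfun_rep[OF X g this] show "hfun g X (wedge x y) = wedge (g x) y + wedge x (g y)" by simp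
  qed
  show "\<forall>w. w \<notin> wedge2 X \<longrightarrow> hfun g X w = 0" by (simp add: hfun_def)
qed

lemma uniq_h:
  assumes X: "vsubspace X" and g: "linear_on X g"
    and h1: "linear_on (wedge2 X) h"
    and h2: "\<And>x y. x \<in> X \<Longrightarrow> y \<in> X \<Longrightarrow> h (wedge x y) = wedge (g x) y + wedge x (g y)"
    and h3: "\<And>w. w \<notin> wedge2 X \<Longrightarrow> h w = 0"
  shows "h = hfun g X"
proof
  fix w show "h w = hfun g X w"
  proof (cases "w \<in> wedge2 X")
    case True
    then obtain L where L: "inX X L" "w = WS L" using wedge2_rep[OF sub_scl[OF X]] by metis
    have "h (WS L) = TW g L" using L(1)
    proof (induction L)
      case Nil then show ?case using lin_zero[OF h1 sub0[OF wedge2_sub]] by simp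
    next
      case (Cons p L)
      then have LL: "inX X L" "fst p \<in> X" "snd p \<in> X" by (auto simp: inX_def)
      have e1: "h (wedge (fst p) (snd p) + WS L) = h (wedge (fst p) (snd p)) + h (WS L)"
        using LL by (intro lin_add[OF h1] wedge_in WS_in)
      show ?case using e1 h2[OF LL(2,3)] Cons.IH[OF LL(1)] by simp
    qed
    then show ?thesis using L hfun_rep[OF X g L(1)] by simp
  next
    case False then show ?thesis using h3 hfun_props[OF X g] by simp
  qed
qed

lemma tilde_eq:
  assumes X: "vsubspace X" and g: "linear_on X g"
  shows "tilde g X = hfun g X"
proof -
  have ex1: "\<exists>!h. linear_on (wedge2 X) h
       \<and> (\<forall>x\<in>X. \<forall>y\<in>X. h (wedge x y) = wedge (g x) y + wedge x (g y))
       \<and> (\<forall>w. w \<notin> wedge2 X \<longrightarrow> h w = 0)"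
  proof (rule ex1I[where a="hfun g X"])
    show "linear_on (wedge2 X) (hfun g X)
       \<and> (\<forall>x\<in>X. \<forall>y\<in>X. hfun g X (wedge x y) = wedge (g x) y + wedge x (g y))
       \<and> (\<forall>w. w \<notin> wedge2 X \<longrightarrow> hfun g X w = 0)" by (rule hfun_props[OF X g])
  next
    fix h assume "linear_on (wedge2 X) h
       \<and> (\<forall>x\<in>X. \<forall>y\<in>X. h (wedge x y) = wedge (g x) y + wedge x (g y))
       \<and> (\<forall>w. w \<notin> wedge2 X \<longrightarrow> h w = 0)"
    then show "h = hfun g X" by (intro uniq_h[OF X g]) auto
  qed
  show ?thesis unfolding tilde_def by (rule the1_equality[OF ex1]) (rule hfun_props[OF X g])
qed

lemma tilde_rep:
  assumes X: "vsubspace X" and g: "linear_on X g" and L: "inX X L"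
  shows "tilde g X (WS L) = TW g L"
  using tilde_eq[OF X g] hfun_rep[OF X g L] by simp



lemma rep_span:
  assumes Y: "vsubspace Y" and S: "finite S" and x: "x \<in> vspan (Y \<union> S)"
  shows "\<exists>y\<in>Y. \<exists>\<mu>. x = y + (\<Sum>s\<in>S. sc (\<mu> s) s)"
proof -
  from x obtain a b where "x = a + b" "a \<in> vspan Y" "b \<in> vspan S" using vs.span_Un by blast
  moreover have "vspan Y = Y" using Y by simp
  moreover obtain u where "b = (\<Sum>v\<in>S. sc (u v) v)" using calculation(3) vs.span_finite[OF S] by blast
  ultimately show ?thesis by blast
qed

lemma coef_unique:
  assumes rb: "rel_basis X Y S" and Y: "vsubspace Y" and y1: "y1 \<in> Y" and y2: "y2 \<in> Y"
    and e: "y1 + (\<Sum>s\<in>S. sc (\<mu>1 s) s) = y2 + (\<Sum>s\<in>S. sc (\<mu>2 s) s)"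
  shows "\<forall>s\<in>S. \<mu>1 s = \<mu>2 s"
proof -
  have "(\<Sum>s\<in>S. sc (\<mu>1 s - \<mu>2 s) s) = (\<Sum>s\<in>S. sc (\<mu>1 s) s) - (\<Sum>s\<in>S. sc (\<mu>2 s) s)"
    by (simp add: vs.scale_left_diff_distrib sum_subtractf)
  also have "\<dots> = y2 - y1" using e by (simp add: algebra_simps)
  finally have "(\<Sum>s\<in>S. sc (\<mu>1 s - \<mu>2 s) s) \<in> Y" using y1 y2 Y by (simp add: vs.subspace_diff)
  with rb show ?thesis unfolding rel_basis_def by fastforce
qed

lemma lin_sum:
  assumes h: "linear_on S h" and S: "vsubspace S" and T: "finite T" and F: "\<forall>t\<in>T. F t \<in> S"
  shows "h (\<Sum>t\<in>T. F t) = (\<Sum>t\<in>T. h (F t))"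
  using T F
proof (induction T rule: finite_induct)
  case empty then show ?case using lin_zero[OF h sub0[OF S]] by simp
next
  case (insert t T)
  have "(\<Sum>t\<in>T. F t) \<in> S" using insert by (auto intro!: vs.subspace_sum[OF S])
  then show ?case using insert lin_add[OF h] by simp
qed

lemma ssum_sub:
  assumes A: "vsubspace A" and B: "vsubspace B" and BA: "B \<subseteq> A" and f: "linear_on A f"
  shows "vsubspace (ssum A (f ` B))"
proof (rule vs.subspaceI)
  have f0: "f 0 = 0" by (rule lin_zero[OF f sub0[OF A]])
  show "0 \<in> ssum A (f ` B)" unfolding ssum_def using sub0[OF A] sub0[OF B] f0
    by (auto intro!: exI[of _ 0] image_eqI[of _ _ 0])
next
  fix x y assume "x \<in> ssum A (f ` B)" "y \<in> ssum A (f ` B)"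
  then obtain a1 b1 a2 b2 where "x = a1 + f b1" "y = a2 + f b2" "a1 \<in> A" "a2 \<in> A" "b1 \<in> B" "b2 \<in> B"
    unfolding ssum_def by blast
  moreover have "f (b1 + b2) = f b1 + f b2" using lin_add[OF f, of b1 b2] BA calculation by auto
  moreover then have "x + y = (a1 + a2) + f (b1 + b2)" using calculation by (simp add: algebra_simps)
  moreover have "a1 + a2 \<in> A" using calculation(3,4) by (rule subadd[OF A])
  moreover have "f (b1 + b2) \<in> f ` B" using calculation(5,6) by (intro imageI subadd[OF B])
  ultimately show "x + y \<in> ssum A (f ` B)" unfolding ssum_def by blast
next
  fix c x assume "x \<in> ssum A (f ` B)"
  then obtain a1 b1 where "x = a1 + f b1" "a1 \<in> A" "b1 \<in> B"
    unfolding ssum_def by blast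
  moreover then have "sc c x = sc c a1 + f (sc c b1)" using lin_sc[OF f] BA by (auto simp: vs.scale_right_distrib)
  moreover have "sc c a1 \<in> A" using calculation(2) by (rule subsc[OF A])
  moreover have "f (sc c b1) \<in> f ` B" using calculation(3) by (intro imageI subsc[OF B])
  ultimately show "sc c x \<in> ssum A (f ` B)" unfolding ssum_def by blast
qed

lemma proj_exists:
  assumes U: "vsubspace U" and C: "vsubspace C" and A: "vsubspace A" and B: "vsubspace B"
    and BA: "B \<subseteq> A" and AC: "A \<subseteq> C" and f: "linear_on A f" and fBC: "f ` B \<subseteq> C"
    and T1: "rel_basis A B T" and T2: "inj_on f T" and T3: "rel_basis U C (f ` T)"
  shows "\<exists>P. linear_on U P \<and> (\<forall>c\<in>C. P c = 0) \<and> (\<forall>x\<in>A. f x \<in> U \<and> x - P (f x) \<in> B)"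
proof -
  have fT: "finite T" "T \<subseteq> A" "vspan (B \<union> T) = A" using T1 unfolding rel_basis_def by auto
  have fT': "finite (f ` T)" "f ` T \<subseteq> U" "vspan (C \<union> f ` T) = U" using T3 unfolding rel_basis_def by auto
  have CU: "C \<subseteq> U" using fT'(3) vs.span_superset by blast
  define P where "P u = (\<Sum>t\<in>T. sc ((SOME \<mu>. \<exists>y\<in>C. u = y + (\<Sum>s\<in>f`T. sc (\<mu> s) s)) (f t)) t)" for u
  have Pch: "P u = (\<Sum>t\<in>T. sc (\<mu> (f t)) t)" if y: "y \<in> C" and u: "u = y + (\<Sum>s\<in>f`T. sc (\<mu> s) s)" for u y \<mu>
  proof -
    define \<mu>' where "\<mu>' = (SOME \<mu>. \<exists>y\<in>C. u = y + (\<Sum>s\<in>f`T. sc (\<mu> s) s))"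
    have ex: "\<exists>\<mu>. \<exists>y\<in>C. u = y + (\<Sum>s\<in>f`T. sc (\<mu> s) s)" using y u by blast
    have "\<exists>y\<in>C. u = y + (\<Sum>s\<in>f`T. sc (\<mu>' s) s)" unfolding \<mu>'_def by (rule someI_ex[OF ex])
    then obtain y' where y': "y' \<in> C" "u = y' + (\<Sum>s\<in>f`T. sc (\<mu>' s) s)" by blast
    have "\<forall>s\<in>f`T. \<mu>' s = \<mu> s" by (rule coef_unique[OF T3 C y'(1) y]) (use y' u in simp)
    then show ?thesis unfolding P_def \<mu>'_def[symmetric] by (intro sum.cong) auto
  qed
  have rep: "\<exists>y\<in>C. \<exists>\<mu>. u = y + (\<Sum>s\<in>f`T. sc (\<mu> s) s)" if "u \<in> U" for u
    by (rule rep_span[OF C fT'(1)]) (use that fT'(3) in simp)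
  have linP: "linear_on U P"
    unfolding linear_on_def
  proof (intro conjI ballI allI)
    fix u1 u2 assume u12: "u1 \<in> U" "u2 \<in> U"
    obtain y1 \<mu>1 where r1: "y1 \<in> C" "u1 = y1 + (\<Sum>s\<in>f`T. sc (\<mu>1 s) s)" using rep[OF u12(1)] by blast
    obtain y2 \<mu>2 where r2: "y2 \<in> C" "u2 = y2 + (\<Sum>s\<in>f`T. sc (\<mu>2 s) s)" using rep[OF u12(2)] by blast
    note r = r1 r2
    have "u1 + u2 = (y1 + y2) + (\<Sum>s\<in>f`T. sc (\<mu>1 s + \<mu>2 s) s)"
      using r by (simp add: vs.scale_left_distrib sum.distrib algebra_simps)
    then have "P (u1 + u2) = (\<Sum>t\<in>T. sc (\<mu>1 (f t) + \<mu>2 (f t)) t)"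
      using subadd[OF C r(1) r(3)] by (intro Pch) 
    also have "\<dots> = P u1 + P u2" using Pch[OF r(1,2)] Pch[OF r(3,4)]
      by (simp add: vs.scale_left_distrib sum.distrib)
    finally show "P (u1 + u2) = P u1 + P u2" .
  next
    fix c u1 assume u1: "u1 \<in> U"
    obtain y1 \<mu>1 where r: "y1 \<in> C" "u1 = y1 + (\<Sum>s\<in>f`T. sc (\<mu>1 s) s)" using rep[OF u1] by blast
    have "sc c u1 = sc c y1 + (\<Sum>s\<in>f`T. sc (c * \<mu>1 s) s)"
      using r by (simp add: vs.scale_right_distrib vs.scale_sum_right)
    then have "P (sc c u1) = (\<Sum>t\<in>T. sc (c * \<mu>1 (f t)) t)"
      using subsc[OF C r(1)] by (intro Pch)
    also have "\<dots> = sc c (P u1)" using Pch[OF r(1,2)]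
      by (simp add: vs.scale_sum_right)
    finally show "P (sc c u1) = sc c (P u1)" .
  qed
  have P0: "\<forall>c\<in>C. P c = 0"
  proof
    fix c assume c: "c \<in> C"
    have "c = c + (\<Sum>s\<in>f`T. sc ((\<lambda>_. 0) s) s)" by simp
    from Pch[OF c this] show "P c = 0" by simp
  qed
  have PA: "f x \<in> U \<and> x - P (f x) \<in> B" if x: "x \<in> A" for x
  proof -
    obtain b la where r: "b \<in> B" "x = b + (\<Sum>t\<in>T. sc (la t) t)"
      using rep_span[OF B fT(1), of x] x fT(3) by blast
    have bA: "b \<in> A" using r BA by blast
    have sA: "(\<Sum>t\<in>T. sc (la t) t) \<in> A" using fT(2) by (intro vs.subspace_sum[OF A] subsc[OF A]) auto
    have "f x = f b + (\<Sum>t\<in>T. f (sc (la t) t))"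
    proof -
      have "f (\<Sum>t\<in>T. sc (la t) t) = (\<Sum>t\<in>T. f (sc (la t) t))"
        using fT(2) by (intro lin_sum[OF f A fT(1)]) (auto intro: subsc[OF A])
      then show ?thesis using r lin_add[OF f bA sA] by simp
    qed
    also have "\<dots> = f b + (\<Sum>t\<in>T. sc (la t) (f t))"
      using lin_sc[OF f] fT(2) by (intro arg_cong[where f="\<lambda>z. f b + z"] sum.cong) auto
    also have "(\<Sum>t\<in>T. sc (la t) (f t)) = (\<Sum>s\<in>f`T. sc (la (inv_into T f s)) s)"
      using sum.reindex[OF T2, of "\<lambda>s. sc (la (inv_into T f s)) s"] T2 by (simp add: inv_into_f_f)
    finally have fx: "f x = f b + (\<Sum>s\<in>f`T. sc (la (inv_into T f s)) s)" .
    have fbC: "f b \<in> C" using fBC r(1) by blast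
    have "P (f x) = (\<Sum>t\<in>T. sc (la (inv_into T f (f t))) t)" by (rule Pch[OF fbC fx])
    also have "\<dots> = (\<Sum>t\<in>T. sc (la t) t)" using T2 by (intro sum.cong) (auto simp: inv_into_f_f)
    finally have "x - P (f x) = b" using r by simp
    moreover have "f x \<in> U" unfolding fx
      using fbC CU fT'(2) by (auto intro!: subadd[OF U] vs.subspace_sum[OF U] subsc[OF U])
    ultimately show ?thesis using r by simp
  qed
  show ?thesis using linP P0 PA by blast
qed



lemma key:
  assumes U: "vsubspace U" and A: "vsubspace A" and B: "vsubspace B"
    and AC: "A \<subseteq> C" and CU: "C \<subseteq> U"
    and f: "linear_on A f" and P: "linear_on U P" and P0: "\<forall>c\<in>C. P c = 0"
    and PA: "\<forall>x\<in>A. f x \<in> U \<and> x - P (f x) \<in> B"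
    and L: "inX A L" and L': "inX C L'" and e: "TW f L = WS L'"
  shows "\<exists>LB. inX B LB \<and> WS L = WS LB"
proof -
  define Q where "Q x = P (f x)" for x
  define R where "R x = x - Q x" for x
  have AU: "A \<subseteq> U" using AC CU by blast
  have fU: "x \<in> A \<Longrightarrow> f x \<in> U" for x using PA by blast
  have RB: "x \<in> A \<Longrightarrow> R x \<in> B" for x using PA unfolding R_def Q_def by blast
  have linQ: "linear_on A Q" unfolding linear_on_def Q_def
    using lin_add[OF f] lin_sc[OF f] lin_add[OF P] lin_sc[OF P] fU subadd[OF A] subsc[OF A] by simp
  have linR: "linear_on A R" unfolding linear_on_def R_def
    using lin_add[OF linQ] lin_sc[OF linQ] by (simp add: vs.scale_right_diff_distrib)
  have Pa: "a \<in> A \<Longrightarrow> P a = 0" for a using P0 AC by blast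
  have Pna: "P (- a) = 0" if "a \<in> A" for a
  proof -
    have "a \<in> U" using that AU by blast
    then show ?thesis using lin_neg[OF P] Pa[OF that] by simp
  qed
  have Pnfa: "a \<in> A \<Longrightarrow> P (- f a) = - Q a" for a using lin_neg[OF P fU] unfolding Q_def by simp
  have Pc: "c \<in> C \<Longrightarrow> P c = 0" for c using P0 by blast
  have Pnc: "P (- c) = 0" if "c \<in> C" for c
  proof -
    have "c \<in> U" using that CU by blast
    then show ?thesis using lin_neg[OF P] Pc[OF that] by simp
  qed
  define L3 where "L3 = (map (\<lambda>p. (f (fst p), snd p)) L @ map (\<lambda>p. (- snd p, f (fst p))) L
     @ map (\<lambda>p. (fst p, f (snd p))) L @ map (\<lambda>p. (- f (snd p), fst p)) L)
     @ (map (\<lambda>p. (- fst p, snd p)) L' @ map (\<lambda>p. (snd p, fst p)) L')"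
  have LA: "\<forall>p\<in>set L. fst p \<in> A \<and> snd p \<in> A" using L by (simp add: inX_def)
  have LC: "\<forall>p\<in>set L'. fst p \<in> C \<and> snd p \<in> C" using L' by (simp add: inX_def)
  have L3U: "\<forall>p\<in>set L3. fst p \<in> U"
  proof -
    have LA': "a \<in> U" "b \<in> U" "f a \<in> U" "f b \<in> U" if "(a,b) \<in> set L" for a b
      using LA that AU fU by force+
    have LC': "a \<in> U" "b \<in> U" if "(a,b) \<in> set L'" for a b
      using LC that CU by force+
    show ?thesis unfolding L3_def using LA' LC' by (auto intro!: subneg[OF U])
  qed
  have s3a: "sum_list (map (\<lambda>p. fst p i * snd p j) (map (\<lambda>p. (f (fst p), snd p)) L @ map (\<lambda>p. (- snd p, f (fst p))) L
     @ map (\<lambda>p. (fst p, f (snd p))) L @ map (\<lambda>p. (- f (snd p), fst p)) L)) = TW f L (i,j)" for i j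
    unfolding TW_apply by (induction L) (auto simp: fa algebra_simps)
  have s3b: "sum_list (map (\<lambda>p. fst p i * snd p j) (map (\<lambda>p. (- fst p, snd p)) L' @ map (\<lambda>p. (snd p, fst p)) L')) = - WS L' (i,j)" for i j
    unfolding WS_apply by (induction L') (auto simp: fa algebra_simps)
  have hyp: "\<forall>i j. sum_list (map (\<lambda>p. fst p i * snd p j) L3) = 0"
  proof (intro allI)
    fix i j
    have "sum_list (map (\<lambda>p. fst p i * snd p j) L3) = TW f L (i,j) + - WS L' (i,j)"
      unfolding L3_def map_append sum_list_append s3a[unfolded map_append sum_list_append] s3b[unfolded map_append sum_list_append] ..
    then show "sum_list (map (\<lambda>p. fst p i * snd p j) L3) = 0" using e by simp
  qed
  have tl: "sum_list (map (\<lambda>p. P (fst p) i * snd p j) L3) = 0" for i j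
    by (rule tensor_left[OF U P L3U hyp])
  have t3a: "sum_list (map (\<lambda>p. P (fst p) i * snd p j) (map (\<lambda>p. (f (fst p), snd p)) L @ map (\<lambda>p. (- snd p, f (fst p))) L
     @ map (\<lambda>p. (fst p, f (snd p))) L @ map (\<lambda>p. (- f (snd p), fst p)) L))
     = sum_list (map (\<lambda>p. Q (fst p) i * snd p j - Q (snd p) i * fst p j) L)" for i j
    using LA by (induction L) (auto simp: fa algebra_simps Pa Pna Pnfa Q_def[symmetric])
  have t3b: "sum_list (map (\<lambda>p. P (fst p) i * snd p j) (map (\<lambda>p. (- fst p, snd p)) L' @ map (\<lambda>p. (snd p, fst p)) L')) = 0" for i j
    using LC by (induction L') (auto simp: fa Pc Pnc)
  have N0: "sum_list (map (\<lambda>p. Q (fst p) i * snd p j - Q (snd p) i * fst p j) L) = 0" for i j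
  proof -
    have "sum_list (map (\<lambda>p. P (fst p) i * snd p j) L3) = sum_list (map (\<lambda>p. Q (fst p) i * snd p j - Q (snd p) i * fst p j) L) + 0"
      unfolding L3_def map_append sum_list_append t3a[unfolded map_append sum_list_append] t3b[unfolded map_append sum_list_append] ..
    then show ?thesis using tl[of i j] by simp
  qed
  define L4 where "L4 = map (\<lambda>p. (Q (fst p), snd p)) L @ map (\<lambda>p. (- Q (snd p), fst p)) L"
  have L4A: "\<forall>p\<in>set L4. snd p \<in> A" using LA unfolding L4_def by auto
  have h4: "\<forall>i j. sum_list (map (\<lambda>p. fst p i * snd p j) L4) = 0"
  proof (intro allI)
    fix i j
    have "sum_list (map (\<lambda>p. fst p i * snd p j) L4) = sum_list (map (\<lambda>p. Q (fst p) i * snd p j - Q (snd p) i * fst p j) L)"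
      unfolding L4_def by (induction L) (auto simp: fa algebra_simps)
    then show "sum_list (map (\<lambda>p. fst p i * snd p j) L4) = 0" using N0 by simp
  qed
  have EQ: "sum_list (map (\<lambda>p. fst p i * Q (snd p) j) L4) = 0" for i j
    by (rule tensor_right[OF A linQ L4A h4])
  have ER: "sum_list (map (\<lambda>p. fst p i * R (snd p) j) L4) = 0" for i j
    by (rule tensor_right[OF A linR L4A h4])
  define LB where "LB = map (\<lambda>p. (R (fst p), R (snd p))) L"
  have "WS L (i,j) = WS LB (i,j) + sum_list (map (\<lambda>p. fst p i * R (snd p) j) L4)
     - sum_list (map (\<lambda>p. fst p j * R (snd p) i) L4) + sum_list (map (\<lambda>p. fst p i * Q (snd p) j) L4)" for i j
    unfolding WS_apply LB_def L4_def R_def by (induction L) (auto simp: fa algebra_simps)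
  then have "WS L = WS LB" using EQ ER by (auto simp: fun_eq_iff)
  moreover have "inX B LB" using LA RB unfolding LB_def inX_def by auto
  ultimately show ?thesis by blast
qed

theorem corollary3p3:
  fixes V :: "('i \<Rightarrow> 'a::{field, finite}) set"
    and NV :: "('i \<times> 'i \<Rightarrow> 'a) set"
    and A B U :: "('i \<Rightarrow> 'a) set"
    and f :: "('i \<Rightarrow> 'a) \<Rightarrow> ('i \<Rightarrow> 'a)"
  assumes V: "vsubspace V"
    and NV: "vsubspace NV" "NV \<subseteq> wedge2 V"
    and B: "vsubspace B" "fin_dim B" "B \<subseteq> A"
    and A: "vsubspace A" "fin_dim A" "A \<subseteq> V"
    and f_lin: "linear_on A f"
    and f_B: "f ` B \<subseteq> V"
    and f_der: "tilde f B ` (NV \<inter> wedge2 B) \<subseteq> NV"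
    and U: "vsubspace U" "ssum A (f ` B) \<subseteq> U"
    and T: "\<exists>T. rel_basis A B T \<and> inj_on f T \<and> rel_basis U (ssum A (f ` B)) (f ` T)"
  shows "NV \<inter> wedge2 (ssum A (f ` B))
           = ssum (NV \<inter> wedge2 (ssum A (f ` B))) (tilde f A ` (NV \<inter> wedge2 A))
             \<inter> wedge2 (ssum A (f ` B))
       \<and> tilde f A ` (NV \<inter> wedge2 A)
           \<subseteq> ssum (NV \<inter> wedge2 (ssum A (f ` B))) (tilde f A ` (NV \<inter> wedge2 A))
       \<and> (\<forall>w\<in>wedge2 B. tilde f A w = tilde f B w)"
proof -
  obtain T where T1: "rel_basis A B T" and T2: "inj_on f T" and T3: "rel_basis U (ssum A (f ` B)) (f ` T)"
    using T by blast
  define C where "C = ssum A (f ` B)"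
  have fB: "linear_on B f" using f_lin B(3) unfolding linear_on_def by blast
  have Csub: "vsubspace C" unfolding C_def by (rule ssum_sub[OF A(1) B(1) B(3) f_lin])
  have f0: "f 0 = 0" by (rule lin_zero[OF f_lin sub0[OF A(1)]])
  have AC: "A \<subseteq> C"
  proof
    fix a assume "a \<in> A"
    moreover have "a = a + f 0" using f0 by simp
    moreover have "f 0 \<in> f ` B" using sub0[OF B(1)] by blast
    ultimately show "a \<in> C" unfolding C_def ssum_def by blast
  qed
  have fBC: "f ` B \<subseteq> C"
  proof
    fix y assume "y \<in> f ` B"
    moreover have "y = 0 + y" by simp
    ultimately show "y \<in> C" unfolding C_def ssum_def using sub0[OF A(1)] by blast
  qed
  have CU0: "vspan (C \<union> f ` T) = U" using T3 unfolding rel_basis_def C_def by (elim conjE)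
  have CU: "C \<subseteq> U" using vs.span_superset[of "C \<union> f ` T"] unfolding CU0 by (rule subset_trans[rotated]) simp
  obtain P where P: "linear_on U P" "\<forall>c\<in>C. P c = 0" "\<forall>x\<in>A. f x \<in> U \<and> x - P (f x) \<in> B"
    using proj_exists[OF U(1) Csub A(1) B(1) B(3) AC f_lin fBC T1 T2 T3[folded C_def]] by blast
  have c3: "\<forall>w\<in>wedge2 B. tilde f A w = tilde f B w"
  proof
    fix w assume "w \<in> wedge2 B"
    then obtain LB where LB: "inX B LB" "w = WS LB" using wedge2_rep[OF sub_scl[OF B(1)]] by blast
    have "inX A LB" using LB(1) B(3) unfolding inX_def by blast
    then show "tilde f A w = tilde f B w"
      using LB tilde_rep[OF A(1) f_lin] tilde_rep[OF B(1) fB] by simp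
  qed
  have keyNV: "tilde f A m \<in> NV" if m: "m \<in> NV" "m \<in> wedge2 A" and tm: "tilde f A m \<in> wedge2 C" for m
  proof -
    obtain L where L: "inX A L" "m = WS L" using wedge2_rep[OF sub_scl[OF A(1)] m(2)] by blast
    have tL: "tilde f A m = TW f L" using tilde_rep[OF A(1) f_lin L(1)] L(2) by simp
    have "TW f L \<in> wedge2 C" using tm tL by simp
    then obtain L' where L': "inX C L'" "TW f L = WS L'" using wedge2_rep[OF sub_scl[OF Csub]] by blast
    obtain LB where LB: "inX B LB" "WS L = WS LB"
      using key[OF U(1) A(1) B(1) AC CU f_lin P(1) P(2) P(3) L(1) L'(1) L'(2)] by blast
    have mB: "m \<in> wedge2 B" using WS_in[OF LB(1)] LB(2) L(2) by simp
    then have "tilde f A m = tilde f B m" using c3 by blast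
    moreover have "tilde f B m \<in> NV" using f_der m(1) mB by blast
    ultimately show ?thesis by simp
  qed
  have tA0: "tilde f A 0 = 0" using tilde_rep[OF A(1) f_lin, of "[]"] by (simp add: inX_def)
  have z: "0 \<in> NV \<inter> wedge2 A" using sub0[OF NV(1)] sub0[OF wedge2_sub] by blast
  have zC: "0 \<in> NV \<inter> wedge2 C" using sub0[OF NV(1)] sub0[OF wedge2_sub] by blast
  have p1: "NV \<inter> wedge2 C = ssum (NV \<inter> wedge2 C) (tilde f A ` (NV \<inter> wedge2 A)) \<inter> wedge2 C"
  proof
    show "NV \<inter> wedge2 C \<subseteq> ssum (NV \<inter> wedge2 C) (tilde f A ` (NV \<inter> wedge2 A)) \<inter> wedge2 C"
    proof
      fix w assume w: "w \<in> NV \<inter> wedge2 C"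
      have "w = w + tilde f A 0" using tA0 by simp
      moreover have "tilde f A 0 \<in> tilde f A ` (NV \<inter> wedge2 A)" using z by blast
      ultimately show "w \<in> ssum (NV \<inter> wedge2 C) (tilde f A ` (NV \<inter> wedge2 A)) \<inter> wedge2 C"
        using w unfolding ssum_def by blast
    qed
  next
    show "ssum (NV \<inter> wedge2 C) (tilde f A ` (NV \<inter> wedge2 A)) \<inter> wedge2 C \<subseteq> NV \<inter> wedge2 C"
    proof
      fix w assume w: "w \<in> ssum (NV \<inter> wedge2 C) (tilde f A ` (NV \<inter> wedge2 A)) \<inter> wedge2 C"
      then obtain n m where nm: "w = n + tilde f A m" "n \<in> NV" "n \<in> wedge2 C" "m \<in> NV" "m \<in> wedge2 A"
        unfolding ssum_def by blast
      have "tilde f A m = w - n" using nm(1) by simp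
      also have "\<dots> \<in> wedge2 C" using w nm(3) by (intro vs.subspace_diff[OF wedge2_sub]) auto
      finally have "tilde f A m \<in> NV" using keyNV nm(4,5) by blast
      then have "w \<in> NV" using nm(1,2) subadd[OF NV(1)] by simp
      then show "w \<in> NV \<inter> wedge2 C" using w by blast
    qed
  qed
  have p2: "tilde f A ` (NV \<inter> wedge2 A) \<subseteq> ssum (NV \<inter> wedge2 C) (tilde f A ` (NV \<inter> wedge2 A))"
  proof
    fix t assume "t \<in> tilde f A ` (NV \<inter> wedge2 A)"
    moreover have "t = 0 + t" by simp
    ultimately show "t \<in> ssum (NV \<inter> wedge2 C) (tilde f A ` (NV \<inter> wedge2 A))"
      using zC unfolding ssum_def by blast
  qed
  show ?thesis by (intro conjI p1[unfolded C_def] p2[unfolded C_def] c3)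
qed


end
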